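(* Let $n>1$. For each $k\ge1$ the set of $N\in\mathcal{G}_n$ with $\mathbb{F}_n/N$ nilpotent of class at most $k$ is clopen, and the set $\{N\in\mathcal{G}_n:\mathbb{F}_n/N\text{ is nilpotent}\}$ is $\mathbf{\Sigma}^0_1$-complete.
   Context: $\mathbb{F}_n$ is the free group on $\gamma_1,\dots,\gamma_n$. $\mathcal{G}_n$ is the set of normal subgroups $N\trianglelefteq\mathbb{F}_n$, viewed as a subset of $\{0,1\}^{\mathbb{F}_n}$ with the subspace topology of the product of discrete topologies (a compact zero-dimensional Polish space). $\mathbf{\Sigma}^0_1$ = open sets. $A\subseteq X$ is $\mathbf{\Sigma}^0_1$-complete if it is open and for every zero-dimensional Polish space $Y$ and every open $B\subseteq Y$ there is a continuous $f:Y\to X$ with $f^{-1}[A]=B$. *)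

theory Defs
  imports "HOL-Analysis.Analysis" "HOL-Algebra.Algebra"
begin

text \<open>Words over letters (i, b): (i, True) stands for gamma_(i+1), (i, False) for its inverse,
  with 0 <= i < n.\<close>

type_synonym fg_word = "(nat \<times> bool) list"

definition letter_inv :: "nat \<times> bool \<Rightarrow> nat \<times> bool" where
  "letter_inv x = (fst x, \<not> snd x)"

fun cancel_cons :: "nat \<times> bool \<Rightarrow> fg_word \<Rightarrow> fg_word" where
  "cancel_cons x [] = [x]"
| "cancel_cons x (y # ys) = (if y = letter_inv x then ys else x # y # ys)"

definition reduce :: "fg_word \<Rightarrow> fg_word" where
  "reduce w = foldr cancel_cons w []"

fun reduced :: "fg_word \<Rightarrow> bool" where
  "reduced (x # y # ys) = (y \<noteq> letter_inv x \<and> reduced (y # ys))"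
| "reduced _ = True"

definition free_group :: "nat \<Rightarrow> fg_word monoid" where
  "free_group n = \<lparr> carrier = {w. reduced w \<and> (\<forall>x\<in>set w. fst x < n)},
                    mult = (\<lambda>u v. reduce (u @ v)),
                    one = [] \<rparr>"

text \<open>lower_central G 0 = G (= gamma_1), lower_central G (Suc i) = [gamma_(i+1), G].\<close>

fun lower_central :: "('a, 'b) monoid_scheme \<Rightarrow> nat \<Rightarrow> 'a set" where
  "lower_central G 0 = carrier G"
| "lower_central G (Suc i) =
     generate G (\<Union>h1 \<in> lower_central G i. \<Union>h2 \<in> carrier G.
        { h1 \<otimes>\<^bsub>G\<^esub> h2 \<otimes>\<^bsub>G\<^esub> inv\<^bsub>G\<^esub> h1 \<otimes>\<^bsub>G\<^esub> inv\<^bsub>G\<^esub> h2 })"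

definition nilpotent_class_le :: "('a, 'b) monoid_scheme \<Rightarrow> nat \<Rightarrow> bool" where
  "nilpotent_class_le G k \<longleftrightarrow> lower_central G k = {\<one>\<^bsub>G\<^esub>}"

definition nilpotent_grp :: "('a, 'b) monoid_scheme \<Rightarrow> bool" where
  "nilpotent_grp G \<longleftrightarrow> (\<exists>k. nilpotent_class_le G k)"

text \<open>A subset of F_n is encoded by its characteristic function fg_word \<Rightarrow> bool
  (false outside F_n).  The ambient space is the product of discrete spaces;
  since all points of G_n vanish off F_n, this is homeomorphic to {0,1}^F_n restricted to G_n.\<close>

definition Gn_points :: "nat \<Rightarrow> (fg_word \<Rightarrow> bool) set" where
  "Gn_points n = {P. normal {w. P w} (free_group n)}"

definition Gn_top :: "nat \<Rightarrow> (fg_word \<Rightarrow> bool) topology" where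
  "Gn_top n = subtopology (product_topology (\<lambda>_. discrete_topology (UNIV :: bool set)) UNIV)
                          (Gn_points n)"

definition Polish_top :: "'a topology \<Rightarrow> bool" where
  "Polish_top Z \<longleftrightarrow> completely_metrizable_space Z \<and> separable_space Z"

definition zero_dim_Polish :: "'a topology \<Rightarrow> bool" where
  "zero_dim_Polish Z \<longleftrightarrow> Polish_top Z \<and> Z dim_le 0"

definition clopenin :: "'a topology \<Rightarrow> 'a set \<Rightarrow> bool" where
  "clopenin T U \<longleftrightarrow> openin T U \<and> closedin T U"

text \<open>Sigma^0_1-completeness, relative to zero-dimensional Polish spaces carried by type 'y.
  In the main theorem 'y is a free (hence universally quantified) type variable.\<close>
definition Sigma01_complete :: "'y itself \<Rightarrow> 'a topology \<Rightarrow> 'a set \<Rightarrow> bool" where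
  "Sigma01_complete _ T S \<longleftrightarrow> openin T S \<and>
     (\<forall>(Z :: 'y topology) U. zero_dim_Polish Z \<and> openin Z U \<longrightarrow>
        (\<exists>f. continuous_map Z T f \<and> {y \<in> topspace Z. f y \<in> S} = U))"

end

theory Submission
  imports Defs
begin

lemma letter_inv_inv [simp]: "letter_inv (letter_inv x) = x"
  by (simp add: letter_inv_def)

lemma letter_inv_neq [simp]: "letter_inv x \<noteq> x"
  by (cases x) (simp add: letter_inv_def)

lemma fst_letter_inv [simp]: "fst (letter_inv x) = fst x"
  by (simp add: letter_inv_def)

lemma reduced_tl: "reduced (x # ys) \<Longrightarrow> reduced ys"
  by (cases ys) auto

lemma reduced_cancel_cons: "reduced ys \<Longrightarrow> reduced (cancel_cons x ys)"
proof (cases ys)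
  case Nil then show ?thesis by simp
next
  case (Cons y zs)
  assume r: "reduced ys"
  show ?thesis
  proof (cases "y = letter_inv x")
    case True then show ?thesis using r Cons by (simp add: reduced_tl)
  next
    case False then show ?thesis using r Cons by (simp add: letter_inv_def)
  qed
qed

lemma reduced_foldr: "reduced ys \<Longrightarrow> reduced (foldr cancel_cons w ys)"
  by (induction w) (auto intro: reduced_cancel_cons)

lemma reduced_reduce: "reduced (reduce w)"
  unfolding reduce_def by (rule reduced_foldr) simp

lemma cancel_cons_reduced: "reduced (x # w) \<Longrightarrow> cancel_cons x w = x # w"
  by (cases w) (auto simp: letter_inv_def)

lemma reduce_reduced: "reduced w \<Longrightarrow> reduce w = w"
proof (induction w)
  case Nil then show ?case by (simp add: reduce_def)
next
  case (Cons x w)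
  then have "reduce w = w" using reduced_tl by blast
  then show ?case using Cons.prems by (simp add: reduce_def cancel_cons_reduced)
qed

lemma reduce_reduce [simp]: "reduce (reduce w) = reduce w"
  by (simp add: reduce_reduced reduced_reduce)

lemma cancel_cancel: "reduced ys \<Longrightarrow> cancel_cons x (cancel_cons (letter_inv x) ys) = ys"
proof (cases ys)
  case Nil then show ?thesis by simp
next
  case (Cons y zs)
  assume r: "reduced ys"
  show ?thesis
  proof (cases "y = x")
    case True
    then have "reduced (x # zs)" using r Cons by simp
    then show ?thesis using Cons True by (simp add: cancel_cons_reduced)
  next
    case False then show ?thesis using Cons by simp
  qed
qed

lemma foldr_reduce: "reduced ys \<Longrightarrow> foldr cancel_cons w ys = foldr cancel_cons (reduce w) ys"
proof (induction w)
  case Nil then show ?case by (simp add: reduce_def)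
next
  case (Cons x w)
  define r where "r = reduce w"
  have IH: "foldr cancel_cons w ys = foldr cancel_cons r ys" using Cons r_def by simp
  have rr: "reduced r" unfolding r_def by (rule reduced_reduce)
  have red: "reduce (x # w) = cancel_cons x r" by (simp add: reduce_def r_def)
  show ?case
  proof (cases r)
    case Nil then show ?thesis using IH red by simp
  next
    case (Cons y r')
    show ?thesis
    proof (cases "y = letter_inv x")
      case True
      have "reduced (foldr cancel_cons r' ys)" by (rule reduced_foldr[OF \<open>reduced ys\<close>])
      then have "cancel_cons x (cancel_cons y (foldr cancel_cons r' ys)) = foldr cancel_cons r' ys"
        using True cancel_cancel by simp
      then show ?thesis using IH red Cons True by simp
    next
      case False then show ?thesis using IH red Cons by simp
    qed
  qed
qed

lemma reduce_append: "reduce (u @ v) = foldr cancel_cons u (reduce v)"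
  by (simp add: reduce_def)

lemma reduce_append_reduce: "reduce (u @ v) = reduce (reduce u @ reduce v)"
proof -
  have "reduce (u @ v) = foldr cancel_cons u (reduce v)" by (rule reduce_append)
  also have "\<dots> = foldr cancel_cons (reduce u) (reduce v)" by (rule foldr_reduce[OF reduced_reduce])
  also have "\<dots> = foldr cancel_cons (reduce u) (reduce (reduce v))" by simp
  also have "\<dots> = reduce (reduce u @ reduce v)" by (rule reduce_append[symmetric])
  finally show ?thesis .
qed

lemma reduce_append_left: "reduce (reduce u @ v) = reduce (u @ v)"
  by (metis reduce_append_reduce reduce_reduce)

lemma reduce_append_right: "reduce (u @ reduce v) = reduce (u @ v)"
  by (metis reduce_append_reduce reduce_reduce)

definition inv_word :: "fg_word \<Rightarrow> fg_word" where
  "inv_word w = rev (map letter_inv w)"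

lemma inv_word_inv_word [simp]: "inv_word (inv_word w) = w"
  by (simp add: inv_word_def rev_map comp_def)

lemma foldr_inv: "reduced ys \<Longrightarrow> foldr cancel_cons (w @ inv_word w) ys = ys"
proof (induction w arbitrary: ys)
  case Nil then show ?case by (simp add: inv_word_def)
next
  case (Cons x w)
  have "foldr cancel_cons ((x # w) @ inv_word (x # w)) ys
      = cancel_cons x (foldr cancel_cons (w @ inv_word w) (cancel_cons (letter_inv x) ys))"
    by (simp add: inv_word_def)
  also have "\<dots> = cancel_cons x (cancel_cons (letter_inv x) ys)"
    using Cons reduced_cancel_cons by simp
  also have "\<dots> = ys" using cancel_cancel Cons.prems by simp
  finally show ?case .
qed

lemma reduce_inv_right: "reduce (w @ inv_word w) = []"
  using foldr_inv[of "[]" w] by (simp add: reduce_def)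

lemma reduce_inv_left: "reduce (inv_word w @ w) = []"
  using reduce_inv_right[of "inv_word w"] by simp

lemma set_reduce: "set (reduce w) \<subseteq> set w"
proof -
  have "set (foldr cancel_cons w ys) \<subseteq> set w \<union> set ys" for ys
  proof (induction w)
    case Nil then show ?case by simp
  next
    case (Cons x w)
    have "set (cancel_cons x zs) \<subseteq> insert x (set zs)" for zs
      by (cases zs) auto
    then show ?case using Cons by fastforce
  qed
  then show ?thesis using reduce_def by fastforce
qed

lemma fst_reduce_inv:
  assumes "\<forall>z\<in>set x. fst z < n"
  shows "\<forall>y\<in>set (reduce (inv_word x)). fst y < n"
proof
  fix y assume "y \<in> set (reduce (inv_word x))"
  then have "y \<in> set (inv_word x)" using set_reduce by blast
  then obtain z where "z \<in> set x" "y = letter_inv z" by (auto simp: inv_word_def)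
  then show "fst y < n" using assms by simp
qed

lemma free_group_carrier: "carrier (free_group n) = {w. reduced w \<and> (\<forall>x\<in>set w. fst x < n)}"
  by (simp add: free_group_def)

lemma free_group_mult: "x \<otimes>\<^bsub>free_group n\<^esub> y = reduce (x @ y)"
  by (simp add: free_group_def)

lemma free_group_one: "\<one>\<^bsub>free_group n\<^esub> = []"
  by (simp add: free_group_def)

lemma free_group_is_group: "group (free_group n)"
proof (rule groupI)
  fix x y assume "x \<in> carrier (free_group n)" "y \<in> carrier (free_group n)"
  then show "x \<otimes>\<^bsub>free_group n\<^esub> y \<in> carrier (free_group n)"
    using set_reduce[of "x @ y"] by (auto simp: free_group_carrier free_group_mult reduced_reduce)
next
  show "\<one>\<^bsub>free_group n\<^esub> \<in> carrier (free_group n)"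
    by (simp add: free_group_carrier free_group_one)
next
  fix x y z
  show "x \<otimes>\<^bsub>free_group n\<^esub> y \<otimes>\<^bsub>free_group n\<^esub> z = x \<otimes>\<^bsub>free_group n\<^esub> (y \<otimes>\<^bsub>free_group n\<^esub> z)"
    by (simp add: free_group_mult reduce_append_left reduce_append_right)
next
  fix x assume "x \<in> carrier (free_group n)"
  then show "\<one>\<^bsub>free_group n\<^esub> \<otimes>\<^bsub>free_group n\<^esub> x = x"
    by (simp add: free_group_carrier free_group_mult free_group_one reduce_reduced)
next
  fix x assume x: "x \<in> carrier (free_group n)"
  show "\<exists>y\<in>carrier (free_group n). y \<otimes>\<^bsub>free_group n\<^esub> x = \<one>\<^bsub>free_group n\<^esub>"
  proof (intro bexI)
    show "reduce (inv_word x) \<otimes>\<^bsub>free_group n\<^esub> x = \<one>\<^bsub>free_group n\<^esub>"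
      by (simp add: free_group_mult free_group_one reduce_append_left reduce_inv_left)
    show "reduce (inv_word x) \<in> carrier (free_group n)"
    proof -
      have "\<forall>y\<in>set (reduce (inv_word x)). fst y < n"
        using x fst_reduce_inv[of x n] by (simp add: free_group_carrier)
      then show ?thesis by (simp add: free_group_carrier reduced_reduce)
    qed
  qed
qed

lemma free_group_inv:
  assumes "x \<in> carrier (free_group n)"
  shows "inv\<^bsub>free_group n\<^esub> x = reduce (inv_word x)"
proof -
  interpret group "free_group n" by (rule free_group_is_group)
  have "\<forall>y\<in>set (reduce (inv_word x)). fst y < n"
    using assms fst_reduce_inv[of x n] by (simp add: free_group_carrier)
  then have c: "reduce (inv_word x) \<in> carrier (free_group n)"
    by (simp add: free_group_carrier reduced_reduce)
  have "reduce (inv_word x) \<otimes>\<^bsub>free_group n\<^esub> x = \<one>\<^bsub>free_group n\<^esub>"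
    by (simp add: free_group_mult free_group_one reduce_append_left reduce_inv_left)
  then show ?thesis using inv_equality[OF _ assms c] by simp
qed

definition gens :: "nat \<Rightarrow> fg_word set" where
  "gens n = {[(i, True)] | i. i < n}"

lemma gens_finite: "finite (gens n)"
proof -
  have "gens n = (\<lambda>i. [(i, True)]) ` {..<n}" by (auto simp: gens_def)
  then show ?thesis by simp
qed

lemma gens_carrier: "gens n \<subseteq> carrier (free_group n)"
  by (auto simp: gens_def free_group_carrier)

lemma free_group_generated: "carrier (free_group n) \<subseteq> generate (free_group n) (gens n)"
proof
  interpret group "free_group n" by (rule free_group_is_group)
  fix w assume "w \<in> carrier (free_group n)"
  then show "w \<in> generate (free_group n) (gens n)"
  proof (induction w)
    case Nil then show ?case using generate.one[of "free_group n"] by (simp add: free_group_one)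
  next
    case (Cons x w)
    have wc: "w \<in> carrier (free_group n)" using Cons.prems reduced_tl[of x w]
      by (simp add: free_group_carrier)
    have xw: "x # w = [x] \<otimes>\<^bsub>free_group n\<^esub> w"
      using Cons.prems by (simp add: free_group_mult free_group_carrier reduce_reduced)
    have xg: "[x] \<in> generate (free_group n) (gens n)"
    proof (cases "snd x")
      case True
      then have "[x] \<in> gens n" using Cons.prems
        by (cases x) (auto simp: gens_def free_group_carrier)
      then show ?thesis by (rule generate.incl)
    next
      case False
      have g: "[(fst x, True)] \<in> gens n" using Cons.prems
        by (auto simp: gens_def free_group_carrier)
      have gc: "[(fst x, True)] \<in> carrier (free_group n)" using g gens_carrier by blast
      have "inv\<^bsub>free_group n\<^esub> [(fst x, True)] = [x]"
        using free_group_inv[OF gc] False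
        by (cases x) (simp add: inv_word_def letter_inv_def reduce_def)
      then show ?thesis using generate.inv[of _ _ "free_group n", OF g] by simp
    qed
    show ?case using xw generate.eng[OF xg Cons.IH[OF wc]] by simp
  qed
qed


fun comms :: "('a, 'b) monoid_scheme \<Rightarrow> 'a set \<Rightarrow> nat \<Rightarrow> 'a set" where
  "comms G Y 0 = Y"
| "comms G Y (Suc k) = (\<Union>c \<in> comms G Y k. \<Union>y \<in> Y. {c \<otimes>\<^bsub>G\<^esub> y \<otimes>\<^bsub>G\<^esub> inv\<^bsub>G\<^esub> c \<otimes>\<^bsub>G\<^esub> inv\<^bsub>G\<^esub> y})"

lemma comms_finite: "finite Y \<Longrightarrow> finite (comms G Y k)"
  by (induction k) auto

context group
begin

lemma cancel1: "x \<in> carrier G \<Longrightarrow> y \<in> carrier G \<Longrightarrow> x \<otimes> (inv x \<otimes> y) = y"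
  by (simp add: m_assoc[symmetric])
lemma cancel2: "x \<in> carrier G \<Longrightarrow> y \<in> carrier G \<Longrightarrow> inv x \<otimes> (x \<otimes> y) = y"
  by (simp add: m_assoc[symmetric])

lemmas gsimps = m_assoc inv_mult_group cancel1 cancel2

lemma comm_inv_right:
  assumes "c \<in> carrier G" "y \<in> carrier G"
  shows "c \<otimes> inv y \<otimes> inv c \<otimes> inv (inv y) = inv y \<otimes> inv (c \<otimes> y \<otimes> inv c \<otimes> inv y) \<otimes> y"
  using assms by (simp add: gsimps)

lemma comm_mult_right:
  assumes "c \<in> carrier G" "a \<in> carrier G" "b \<in> carrier G"
  shows "c \<otimes> (a \<otimes> b) \<otimes> inv c \<otimes> inv (a \<otimes> b)
       = (c \<otimes> a \<otimes> inv c \<otimes> inv a) \<otimes> (a \<otimes> (c \<otimes> b \<otimes> inv c \<otimes> inv b) \<otimes> inv a)"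
  using assms by (simp add: gsimps)

lemma comm_mult_left:
  assumes "g \<in> carrier G" "a \<in> carrier G" "b \<in> carrier G"
  shows "(a \<otimes> b) \<otimes> g \<otimes> inv (a \<otimes> b) \<otimes> inv g
       = (a \<otimes> (b \<otimes> g \<otimes> inv b \<otimes> inv g) \<otimes> inv a) \<otimes> (a \<otimes> g \<otimes> inv a \<otimes> inv g)"
  using assms by (simp add: gsimps)

lemma comm_inv_left:
  assumes "g \<in> carrier G" "h \<in> carrier G"
  shows "inv h \<otimes> g \<otimes> inv (inv h) \<otimes> inv g = inv h \<otimes> inv (h \<otimes> g \<otimes> inv h \<otimes> inv g) \<otimes> h"
  using assms by (simp add: gsimps)

lemma comm_split:
  assumes "g \<in> carrier G" "h \<in> carrier G"
  shows "h \<otimes> g \<otimes> inv h \<otimes> inv g = h \<otimes> (g \<otimes> inv h \<otimes> inv g)"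
  using assms by (simp add: gsimps)

lemma conj_as_comm:
  assumes "g \<in> carrier G" "h \<in> carrier G"
  shows "g \<otimes> h \<otimes> inv g = inv (h \<otimes> g \<otimes> inv h \<otimes> inv g) \<otimes> h"
  using assms by (simp add: gsimps)

lemma conj_comm:
  assumes "g \<in> carrier G" "a \<in> carrier G" "b \<in> carrier G"
  shows "g \<otimes> (a \<otimes> b \<otimes> inv a \<otimes> inv b) \<otimes> inv g
     = (g \<otimes> a \<otimes> inv g) \<otimes> (g \<otimes> b \<otimes> inv g) \<otimes> inv (g \<otimes> a \<otimes> inv g) \<otimes> inv (g \<otimes> b \<otimes> inv g)"
  using assms by (simp add: gsimps)

lemma lower_central_carrier: "lower_central G k \<subseteq> carrier G"
proof (induction k)
  case 0 then show ?case by simp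
next
  case (Suc k)
  show ?case unfolding lower_central.simps
    by (rule generate_incl) (use Suc in blast)
qed

lemma lower_central_normal: "lower_central G k \<lhd> G"
proof (induction k)
  case 0 then show ?case by (simp add: normal_self)
next
  case (Suc k)
  interpret N: normal "lower_central G k" G by (rule Suc)
  have sub: "lower_central G k \<subseteq> carrier G" by (rule lower_central_carrier)
  show ?case unfolding lower_central.simps
  proof (rule normal_generateI)
    show "(\<Union>h1\<in>lower_central G k. \<Union>h2\<in>carrier G. {h1 \<otimes> h2 \<otimes> inv h1 \<otimes> inv h2}) \<subseteq> carrier G"
      using sub by blast
  next
    fix h g assume h: "h \<in> (\<Union>h1\<in>lower_central G k. \<Union>h2\<in>carrier G. {h1 \<otimes> h2 \<otimes> inv h1 \<otimes> inv h2})"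
      and g: "g \<in> carrier G"
    then obtain h1 h2 where h1: "h1 \<in> lower_central G k" and h2: "h2 \<in> carrier G"
      and hh: "h = h1 \<otimes> h2 \<otimes> inv h1 \<otimes> inv h2" by blast
    have h1c: "h1 \<in> carrier G" using h1 sub by blast
    have "g \<otimes> h \<otimes> inv g = (g \<otimes> h1 \<otimes> inv g) \<otimes> (g \<otimes> h2 \<otimes> inv g) \<otimes> inv (g \<otimes> h1 \<otimes> inv g) \<otimes> inv (g \<otimes> h2 \<otimes> inv g)"
      using conj_comm[OF g h1c h2] hh by simp
    moreover have "g \<otimes> h1 \<otimes> inv g \<in> lower_central G k" using N.inv_op_closed2[OF g h1] .
    moreover have "g \<otimes> h2 \<otimes> inv g \<in> carrier G" using g h2 by simp
    ultimately show "g \<otimes> h \<otimes> inv g \<in> (\<Union>h1\<in>lower_central G k. \<Union>h2\<in>carrier G. {h1 \<otimes> h2 \<otimes> inv h1 \<otimes> inv h2})"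
      by blast
  qed
qed

lemma lower_central_subgroup: "subgroup (lower_central G k) G"
  using lower_central_normal normal_imp_subgroup by blast

lemma lower_central_Suc_subset: "lower_central G (Suc k) \<subseteq> lower_central G k"
proof -
  interpret N: normal "lower_central G k" G by (rule lower_central_normal)
  have sub: "lower_central G k \<subseteq> carrier G" by (rule lower_central_carrier)
  show ?thesis unfolding lower_central.simps
  proof (rule generate_subgroup_incl[OF _ lower_central_subgroup])
    show "(\<Union>h1\<in>lower_central G k. \<Union>h2\<in>carrier G. {h1 \<otimes> h2 \<otimes> inv h1 \<otimes> inv h2}) \<subseteq> lower_central G k"
    proof (safe)
      fix h1 h2 assume h1: "h1 \<in> lower_central G k" and h2: "h2 \<in> carrier G"
      have h1c: "h1 \<in> carrier G" using h1 sub by blast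
      have "h2 \<otimes> inv h1 \<otimes> inv h2 \<in> lower_central G k"
        using N.inv_op_closed2[OF h2 N.m_inv_closed[OF h1]] .
      then show "h1 \<otimes> h2 \<otimes> inv h1 \<otimes> inv h2 \<in> lower_central G k"
        using comm_split[OF h2 h1c] h1 N.m_closed by simp
    qed
  qed
qed

lemma comms_subset:
  assumes "Y \<subseteq> carrier G"
  shows "comms G Y k \<subseteq> lower_central G k"
proof (induction k)
  case 0 then show ?case using assms by simp
next
  case (Suc k)
  show ?case
  proof
    fix x assume "x \<in> comms G Y (Suc k)"
    then obtain c y where c: "c \<in> comms G Y k" and y: "y \<in> Y" and x: "x = c \<otimes> y \<otimes> inv c \<otimes> inv y"
      by auto
    have "x \<in> (\<Union>h1\<in>lower_central G k. \<Union>h2\<in>carrier G. {h1 \<otimes> h2 \<otimes> inv h1 \<otimes> inv h2})"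
      using c y x Suc assms by blast
    then show "x \<in> lower_central G (Suc k)" unfolding lower_central.simps by (rule generate.incl)
  qed
qed

lemma comms_carrier: "Y \<subseteq> carrier G \<Longrightarrow> comms G Y k \<subseteq> carrier G"
  using comms_subset lower_central_carrier by blast

lemma comms_normal_closure:
  assumes Y: "Y \<subseteq> carrier G" and gen: "carrier G \<subseteq> generate G Y"
  shows "N \<lhd> G \<Longrightarrow> comms G Y k \<subseteq> N \<Longrightarrow> lower_central G k \<subseteq> N"
proof (induction k arbitrary: N)
  case 0
  then have "generate G Y \<subseteq> N" using generate_subgroup_incl[of Y N] normal_imp_subgroup[OF 0(1)] by simp
  then show ?case using gen by simp
next
  case (Suc k)
  interpret N: normal N G by (rule Suc.prems(1))
  have Nc: "N \<subseteq> carrier G" by (rule N.subset)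
  have Cc: "comms G Y k \<subseteq> carrier G" using comms_carrier[OF Y] .
  define N' where "N' = generate G (N \<union> comms G Y k)"
  have sub: "N \<union> comms G Y k \<subseteq> carrier G" using Nc Cc by blast
  have A: "c \<otimes> g \<otimes> inv c \<otimes> inv g \<in> N" if c: "c \<in> comms G Y k" and g: "g \<in> generate G Y" for c g
    using g
  proof (induction g rule: generate.induct)
    case one
    have cc: "c \<in> carrier G" using c Cc by blast
    then show ?case by (simp add: N.one_closed)
  next
    case (incl y)
    then show ?case using c Suc.prems(2) by auto
  next
    case (inv y)
    have yc: "y \<in> carrier G" using inv Y by blast
    have cc: "c \<in> carrier G" using c Cc by blast
    have "c \<otimes> y \<otimes> inv c \<otimes> inv y \<in> N" using c inv Suc.prems(2) by auto
    then have "inv y \<otimes> inv (c \<otimes> y \<otimes> inv c \<otimes> inv y) \<otimes> y \<in> N"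
      using N.inv_op_closed1[OF yc N.m_inv_closed] by blast
    then show ?case using comm_inv_right[OF cc yc] by simp
  next
    case (eng g1 g2)
    have g1c: "g1 \<in> carrier G" using eng(1) generate_in_carrier Y by blast
    have g2c: "g2 \<in> carrier G" using eng(2) generate_in_carrier Y by blast
    have cc: "c \<in> carrier G" using c Cc by blast
    have "g1 \<otimes> (c \<otimes> g2 \<otimes> inv c \<otimes> inv g2) \<otimes> inv g1 \<in> N"
      using N.inv_op_closed2[OF g1c eng(4)] .
    then show ?case using comm_mult_right[OF cc g1c g2c] eng(3) N.m_closed by simp
  qed
  have A': "c \<otimes> g \<otimes> inv c \<otimes> inv g \<in> N" if c: "c \<in> N \<union> comms G Y k" and g: "g \<in> carrier G" for c g
  proof (cases "c \<in> N")
    case True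
    have cc: "c \<in> carrier G" using True Nc by blast
    have "g \<otimes> inv c \<otimes> inv g \<in> N" using N.inv_op_closed2[OF g N.m_inv_closed[OF True]] .
    then show ?thesis using comm_split[OF g cc] True N.m_closed by simp
  next
    case False
    then show ?thesis using A c g gen by blast
  qed
  have B: "\<forall>g\<in>carrier G. h \<otimes> g \<otimes> inv h \<otimes> inv g \<in> N" if h: "h \<in> N'" for h
    using h unfolding N'_def
  proof (induction h rule: generate.induct)
    case one
    then show ?case by (simp add: N.one_closed)
  next
    case (incl h)
    then show ?case using A' by blast
  next
    case (inv h)
    show ?case
    proof
      fix g assume g: "g \<in> carrier G"
      have hc: "h \<in> carrier G" using inv sub by blast
      have "h \<otimes> g \<otimes> inv h \<otimes> inv g \<in> N" using A' inv g by blast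
      then have "inv h \<otimes> inv (h \<otimes> g \<otimes> inv h \<otimes> inv g) \<otimes> h \<in> N"
        using N.inv_op_closed1[OF hc N.m_inv_closed] by blast
      then show "inv h \<otimes> g \<otimes> inv (inv h) \<otimes> inv g \<in> N" using comm_inv_left[OF g hc] by simp
    qed
  next
    case (eng h1 h2)
    show ?case
    proof
      fix g assume g: "g \<in> carrier G"
      have h1c: "h1 \<in> carrier G" using eng(1) generate_in_carrier sub by blast
      have h2c: "h2 \<in> carrier G" using eng(2) generate_in_carrier sub by blast
      have "h1 \<otimes> (h2 \<otimes> g \<otimes> inv h2 \<otimes> inv g) \<otimes> inv h1 \<in> N"
        using N.inv_op_closed2[OF h1c] eng(4) g by blast
      then show "h1 \<otimes> h2 \<otimes> g \<otimes> inv (h1 \<otimes> h2) \<otimes> inv g \<in> N"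
        using comm_mult_left[OF g h1c h2c] eng(3) g N.m_closed by simp
    qed
  qed
  have N'sub: "subgroup N' G" unfolding N'_def by (rule generate_is_subgroup[OF sub])
  have N'n: "N' \<lhd> G"
  proof (rule normal_invI[OF N'sub])
    fix g h assume g: "g \<in> carrier G" and h: "h \<in> N'"
    have hc: "h \<in> carrier G" using h N'sub subgroup.subset by blast
    have "h \<otimes> g \<otimes> inv h \<otimes> inv g \<in> N" using B h g by blast
    then have "h \<otimes> g \<otimes> inv h \<otimes> inv g \<in> N'" unfolding N'_def by (blast intro: generate.incl)
    then have "inv (h \<otimes> g \<otimes> inv h \<otimes> inv g) \<otimes> h \<in> N'"
      using h subgroup.m_inv_closed[OF N'sub] subgroup.m_closed[OF N'sub] by blast
    then show "g \<otimes> h \<otimes> inv g \<in> N'" using conj_as_comm[OF g hc] by simp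
  qed
  have "comms G Y k \<subseteq> N'" unfolding N'_def by (blast intro: generate.incl)
  then have Lk: "lower_central G k \<subseteq> N'" using Suc.IH[OF N'n] by blast
  show ?case unfolding lower_central.simps
  proof (rule generate_subgroup_incl[OF _ N.subgroup_axioms])
    show "(\<Union>h1\<in>lower_central G k. \<Union>h2\<in>carrier G. {h1 \<otimes> h2 \<otimes> inv h1 \<otimes> inv h2}) \<subseteq> N"
      using B Lk by blast
  qed
qed

end

lemma (in group_hom) hom_comm:
  assumes "a \<in> carrier G" "b \<in> carrier G"
  shows "h (a \<otimes> b \<otimes> inv a \<otimes> inv b) = h a \<otimes>\<^bsub>H\<^esub> h b \<otimes>\<^bsub>H\<^esub> inv\<^bsub>H\<^esub> h a \<otimes>\<^bsub>H\<^esub> inv\<^bsub>H\<^esub> h b"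
  using assms by simp

lemma (in normal) lower_central_Mod:
  "lower_central (G Mod H) k = (\<lambda>a. H #> a) ` lower_central G k"
proof -
  interpret Q: group_hom G "G Mod H" "(\<lambda>a. H #> a)"
    by (simp add: group_hom_def group_hom_axioms_def factorgroup_is_group r_coset_hom_Mod is_group)
  have surj: "carrier (G Mod H) = (\<lambda>a. H #> a) ` carrier G"
    by (auto simp: FactGroup_def RCOSETS_def)
  show ?thesis
  proof (induction k)
    case 0 then show ?case using surj by simp
  next
    case (Suc k)
    have Lc: "lower_central G k \<subseteq> carrier G" by (rule lower_central_carrier)
    let ?S = "\<Union>h1\<in>lower_central G k. \<Union>h2\<in>carrier G. {h1 \<otimes> h2 \<otimes> inv h1 \<otimes> inv h2}"
    have Sc: "?S \<subseteq> carrier G" using Lc by blast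
    have img: "(\<Union>h1\<in>lower_central (G Mod H) k. \<Union>h2\<in>carrier (G Mod H).
          {h1 \<otimes>\<^bsub>G Mod H\<^esub> h2 \<otimes>\<^bsub>G Mod H\<^esub> inv\<^bsub>G Mod H\<^esub> h1 \<otimes>\<^bsub>G Mod H\<^esub> inv\<^bsub>G Mod H\<^esub> h2})
        = (\<lambda>a. H #> a) ` ?S"
    proof -
      have hc: "\<And>a b. a \<in> carrier G \<Longrightarrow> b \<in> carrier G \<Longrightarrow> (H #> a) \<otimes>\<^bsub>G Mod H\<^esub> (H #> b) \<otimes>\<^bsub>G Mod H\<^esub> inv\<^bsub>G Mod H\<^esub> (H #> a) \<otimes>\<^bsub>G Mod H\<^esub> inv\<^bsub>G Mod H\<^esub> (H #> b) = H #> (a \<otimes> b \<otimes> inv a \<otimes> inv b)"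
        by (rule Q.hom_comm[symmetric])
      show ?thesis unfolding Suc surj
      proof (rule equalityI)
        show "(\<Union>h1\<in>(\<lambda>a. H #> a) ` lower_central G k. \<Union>h2\<in>(\<lambda>a. H #> a) ` carrier G.
          {h1 \<otimes>\<^bsub>G Mod H\<^esub> h2 \<otimes>\<^bsub>G Mod H\<^esub> inv\<^bsub>G Mod H\<^esub> h1 \<otimes>\<^bsub>G Mod H\<^esub> inv\<^bsub>G Mod H\<^esub> h2})
          \<subseteq> (\<lambda>a. H #> a) ` ?S"
        proof (clarify)
          fix a b assume a: "a \<in> lower_central G k" and b: "b \<in> carrier G"
          have ac: "a \<in> carrier G" using a Lc by blast
          show "(H #> a) \<otimes>\<^bsub>G Mod H\<^esub> (H #> b) \<otimes>\<^bsub>G Mod H\<^esub> inv\<^bsub>G Mod H\<^esub> (H #> a) \<otimes>\<^bsub>G Mod H\<^esub> inv\<^bsub>G Mod H\<^esub> (H #> b) \<in> (\<lambda>a. H #> a) ` ?S"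
            unfolding hc[OF ac b] using a b by blast
        qed
      next
        show "(\<lambda>a. H #> a) ` ?S \<subseteq> (\<Union>h1\<in>(\<lambda>a. H #> a) ` lower_central G k. \<Union>h2\<in>(\<lambda>a. H #> a) ` carrier G.
          {h1 \<otimes>\<^bsub>G Mod H\<^esub> h2 \<otimes>\<^bsub>G Mod H\<^esub> inv\<^bsub>G Mod H\<^esub> h1 \<otimes>\<^bsub>G Mod H\<^esub> inv\<^bsub>G Mod H\<^esub> h2})"
        proof (clarify)
          fix a b assume a: "a \<in> lower_central G k" and b: "b \<in> carrier G"
          have ac: "a \<in> carrier G" using a Lc by blast
          show "H #> (a \<otimes> b \<otimes> inv a \<otimes> inv b) \<in> (\<Union>h1\<in>(\<lambda>a. H #> a) ` lower_central G k. \<Union>h2\<in>(\<lambda>a. H #> a) ` carrier G.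
          {h1 \<otimes>\<^bsub>G Mod H\<^esub> h2 \<otimes>\<^bsub>G Mod H\<^esub> inv\<^bsub>G Mod H\<^esub> h1 \<otimes>\<^bsub>G Mod H\<^esub> inv\<^bsub>G Mod H\<^esub> h2})"
            unfolding hc[OF ac b, symmetric] using a b by blast
        qed
      qed
    qed
    show ?case unfolding lower_central.simps img
      by (rule Q.generate_img[OF Sc])
  qed
qed

lemma (in normal) nilpotent_class_le_Mod:
  "nilpotent_class_le (G Mod H) k \<longleftrightarrow> lower_central G k \<subseteq> H"
proof -
  have one: "\<one>\<^bsub>G Mod H\<^esub> = H" by (simp add: FactGroup_def)
  have Lc: "lower_central G k \<subseteq> carrier G" by (rule lower_central_carrier)
  have L1: "\<one> \<in> lower_central G k" using subgroup.one_closed[OF lower_central_subgroup] .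
  have "((\<lambda>a. H #> a) ` lower_central G k = {H}) \<longleftrightarrow> lower_central G k \<subseteq> H"
  proof
    assume e: "(\<lambda>a. H #> a) ` lower_central G k = {H}"
    show "lower_central G k \<subseteq> H"
    proof
      fix a assume a: "a \<in> lower_central G k"
      then have "H #> a = H" using e by blast
      moreover have "a \<in> H #> a" using rcos_self[of a H] a Lc subgroup_axioms by blast
      ultimately show "a \<in> H" by simp
    qed
  next
    assume s: "lower_central G k \<subseteq> H"
    have "H #> a = H" if "a \<in> lower_central G k" for a
      using rcos_const[OF is_group] s that by blast
    then show "(\<lambda>a. H #> a) ` lower_central G k = {H}" using L1 by auto
  qed
  then show ?thesis unfolding nilpotent_class_le_def lower_central_Mod one .
qed


definition dmul :: "int \<times> int \<Rightarrow> int \<times> int \<Rightarrow> int \<times> int" where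
  "dmul p q = (fst p * fst q, fst p * snd q + snd p)"

definition ev :: "nat \<times> bool \<Rightarrow> int \<times> int" where
  "ev x = (if fst x = 0 then (-1, 0) else if fst x = 1 then (-1, 1) else (1, 0))"

definition phi :: "fg_word \<Rightarrow> int \<times> int" where
  "phi w = foldr (\<lambda>x acc. dmul (ev x) acc) w (1, 0)"

lemma dmul_assoc: "dmul (dmul p q) r = dmul p (dmul q r)"
  by (simp add: dmul_def algebra_simps)

lemma dmul_one: "dmul p (1, 0) = p" "dmul (1,0) p = p"
  by (simp_all add: dmul_def)

lemma ev_invol: "dmul (ev x) (ev x) = (1, 0)"
  by (simp add: dmul_def ev_def)

lemma ev_letter_inv: "ev (letter_inv x) = ev x"
  by (simp add: ev_def letter_inv_def)

lemma phi_Nil [simp]: "phi [] = (1, 0)" by (simp add: phi_def)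
lemma phi_Cons [simp]: "phi (x # w) = dmul (ev x) (phi w)" by (simp add: phi_def)

lemma phi_append: "phi (u @ v) = dmul (phi u) (phi v)"
  by (induction u) (simp_all add: dmul_one dmul_assoc)

lemma phi_cancel_cons: "phi (cancel_cons x ys) = dmul (ev x) (phi ys)"
proof (cases ys)
  case Nil then show ?thesis by simp
next
  case (Cons y zs)
  show ?thesis
  proof (cases "y = letter_inv x")
    case True
    have "dmul (ev x) (phi ys) = dmul (dmul (ev x) (ev x)) (phi zs)"
      using Cons True by (simp add: ev_letter_inv dmul_assoc)
    then show ?thesis using Cons True by (simp add: ev_invol dmul_one)
  next
    case False then show ?thesis using Cons by simp
  qed
qed

lemma phi_foldr: "phi (foldr cancel_cons w ys) = dmul (phi w) (phi ys)"
  by (induction w) (simp_all add: phi_cancel_cons dmul_one dmul_assoc)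

lemma phi_reduce: "phi (reduce w) = phi w"
  using phi_foldr[of w "[]"] by (simp add: reduce_def dmul_one)

lemma phi_mult: "phi (x \<otimes>\<^bsub>free_group n\<^esub> y) = dmul (phi x) (phi y)"
  by (simp add: free_group_mult phi_reduce phi_append)

lemma phi_one: "phi \<one>\<^bsub>free_group n\<^esub> = (1, 0)"
  by (simp add: free_group_one)

lemma ev_sign: "fst (ev x) = 1 \<or> fst (ev x) = -1"
  by (simp add: ev_def)

lemma phi_sign: "fst (phi w) = 1 \<or> fst (phi w) = -1"
proof (induction w)
  case Nil then show ?case by simp
next
  case (Cons x w)
  then show ?case using ev_sign[of x] by (auto simp: dmul_def)
qed

lemma phi_inv:
  assumes "x \<in> carrier (free_group n)"
  shows "phi (inv\<^bsub>free_group n\<^esub> x) = (fst (phi x), - fst (phi x) * snd (phi x))"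
proof -
  interpret group "free_group n" by (rule free_group_is_group)
  have "x \<otimes>\<^bsub>free_group n\<^esub> inv\<^bsub>free_group n\<^esub> x = \<one>\<^bsub>free_group n\<^esub>" using assms by simp
  then have e: "dmul (phi x) (phi (inv\<^bsub>free_group n\<^esub> x)) = (1, 0)"
    using phi_mult[where n=n] phi_one[of n] by metis
  obtain s m where pm: "phi x = (s, m)" by fastforce
  obtain s' m' where pm': "phi (inv\<^bsub>free_group n\<^esub> x) = (s', m')" by fastforce
  have s: "s = 1 \<or> s = -1" using phi_sign[of x] pm by simp
  have "s * s' = 1" "s * m' + m = 0" using e pm pm' by (auto simp: dmul_def)
  then have "s' = s" "m' = - s * m" using s by auto
  then show ?thesis using pm pm' by simp
qed

definition Wset :: "nat \<Rightarrow> (int \<times> int) set" where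
  "Wset j = {p. fst p = 1 \<and> 2 ^ j dvd snd p}"

lemma upper_bound:
  "w \<in> lower_central (free_group n) (Suc j) \<Longrightarrow> phi w \<in> Wset (Suc j)"
proof (induction j arbitrary: w)
  case 0
  let ?F = "free_group n"
  interpret group ?F by (rule free_group_is_group)
  show ?case using 0 unfolding lower_central.simps
  proof (induction w rule: generate.induct)
    case one then show ?case by (simp add: phi_one Wset_def)
  next
    case (incl h)
    then obtain h1 h2 where h1: "h1 \<in> carrier ?F" and h2: "h2 \<in> carrier ?F"
      and hh: "h = h1 \<otimes>\<^bsub>?F\<^esub> h2 \<otimes>\<^bsub>?F\<^esub> inv\<^bsub>?F\<^esub> h1 \<otimes>\<^bsub>?F\<^esub> inv\<^bsub>?F\<^esub> h2" by auto
    obtain s1 m1 where p1: "phi h1 = (s1, m1)" by fastforce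
    obtain s2 m2 where p2: "phi h2 = (s2, m2)" by fastforce
    have s1: "s1 = 1 \<or> s1 = -1" using phi_sign[of h1] p1 by simp
    have s2: "s2 = 1 \<or> s2 = -1" using phi_sign[of h2] p2 by simp
    have "phi h = dmul (dmul (dmul (s1, m1) (s2, m2)) (s1, - s1 * m1)) (s2, - s2 * m2)"
      using hh p1 p2 phi_inv[OF h1] phi_inv[OF h2] by (simp add: phi_mult)
    then show ?case using s1 s2 by (auto simp: dmul_def Wset_def algebra_simps)
  next
    case (inv h)
    then obtain h1 h2 where h1: "h1 \<in> carrier ?F" and h2: "h2 \<in> carrier ?F"
      and hh: "h = h1 \<otimes>\<^bsub>?F\<^esub> h2 \<otimes>\<^bsub>?F\<^esub> inv\<^bsub>?F\<^esub> h1 \<otimes>\<^bsub>?F\<^esub> inv\<^bsub>?F\<^esub> h2" by auto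
    have hc: "h \<in> carrier ?F" using hh h1 h2 by simp
    obtain s1 m1 where p1: "phi h1 = (s1, m1)" by fastforce
    obtain s2 m2 where p2: "phi h2 = (s2, m2)" by fastforce
    have s1: "s1 = 1 \<or> s1 = -1" using phi_sign[of h1] p1 by simp
    have s2: "s2 = 1 \<or> s2 = -1" using phi_sign[of h2] p2 by simp
    have "phi h = dmul (dmul (dmul (s1, m1) (s2, m2)) (s1, - s1 * m1)) (s2, - s2 * m2)"
      using hh p1 p2 phi_inv[OF h1] phi_inv[OF h2] by (simp add: phi_mult)
    then have "phi h \<in> Wset 1" using s1 s2 by (auto simp: dmul_def Wset_def algebra_simps)
    then show ?case using phi_inv[OF hc] by (auto simp: Wset_def)
  next
    case (eng h1 h2)
    then show ?case by (auto simp: phi_mult dmul_def Wset_def)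
  qed
next
  case (Suc j)
  let ?F = "free_group n"
  interpret group ?F by (rule free_group_is_group)
  show ?case using Suc.prems unfolding lower_central.simps(2)[of _ "Suc j"]
  proof (induction w rule: generate.induct)
    case one then show ?case by (simp add: phi_one Wset_def)
  next
    case (incl h)
    then obtain h1 h2 where h1: "h1 \<in> lower_central ?F (Suc j)" and h2: "h2 \<in> carrier ?F"
      and hh: "h = h1 \<otimes>\<^bsub>?F\<^esub> h2 \<otimes>\<^bsub>?F\<^esub> inv\<^bsub>?F\<^esub> h1 \<otimes>\<^bsub>?F\<^esub> inv\<^bsub>?F\<^esub> h2" by auto
    have h1c: "h1 \<in> carrier ?F" using h1 lower_central_carrier by blast
    obtain s1 m1 where p1: "phi h1 = (s1, m1)" by fastforce
    obtain s2 m2 where p2: "phi h2 = (s2, m2)" by fastforce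
    have w1: "s1 = 1" "2 ^ Suc j dvd m1" using Suc.IH[OF h1] p1 by (auto simp: Wset_def)
    have s2: "s2 = 1 \<or> s2 = -1" using phi_sign[of h2] p2 by simp
    have "phi h = dmul (dmul (dmul (s1, m1) (s2, m2)) (s1, - s1 * m1)) (s2, - s2 * m2)"
      using hh p1 p2 phi_inv[OF h1c] phi_inv[OF h2] by (simp add: phi_mult)
    then show ?case using s2 w1 by (auto simp: dmul_def Wset_def algebra_simps)
  next
    case (inv h)
    then obtain h1 h2 where h1: "h1 \<in> lower_central ?F (Suc j)" and h2: "h2 \<in> carrier ?F"
      and hh: "h = h1 \<otimes>\<^bsub>?F\<^esub> h2 \<otimes>\<^bsub>?F\<^esub> inv\<^bsub>?F\<^esub> h1 \<otimes>\<^bsub>?F\<^esub> inv\<^bsub>?F\<^esub> h2" by auto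
    have h1c: "h1 \<in> carrier ?F" using h1 lower_central_carrier by blast
    have hc: "h \<in> carrier ?F" using hh h1c h2 by simp
    obtain s1 m1 where p1: "phi h1 = (s1, m1)" by fastforce
    obtain s2 m2 where p2: "phi h2 = (s2, m2)" by fastforce
    have w1: "s1 = 1" "2 ^ Suc j dvd m1" using Suc.IH[OF h1] p1 by (auto simp: Wset_def)
    have s2: "s2 = 1 \<or> s2 = -1" using phi_sign[of h2] p2 by simp
    have "phi h = dmul (dmul (dmul (s1, m1) (s2, m2)) (s1, - s1 * m1)) (s2, - s2 * m2)"
      using hh p1 p2 phi_inv[OF h1c] phi_inv[OF h2] by (simp add: phi_mult)
    then have "phi h \<in> Wset (Suc (Suc j))" using s2 w1 by (auto simp: dmul_def Wset_def algebra_simps)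
    then show ?case using phi_inv[OF hc] by (auto simp: Wset_def)
  next
    case (eng h1 h2)
    then show ?case by (auto simp: phi_mult dmul_def Wset_def)
  qed
qed


fun cw :: "nat \<Rightarrow> nat \<Rightarrow> fg_word" where
  "cw n 0 = [(1, True), (0, True)]"
| "cw n (Suc j) = cw n j \<otimes>\<^bsub>free_group n\<^esub> [(0, True)] \<otimes>\<^bsub>free_group n\<^esub>
      inv\<^bsub>free_group n\<^esub> (cw n j) \<otimes>\<^bsub>free_group n\<^esub> inv\<^bsub>free_group n\<^esub> [(0, True)]"

lemma cw_props:
  assumes "n \<ge> 2"
  shows "cw n j \<in> lower_central (free_group n) j \<and> phi (cw n j) = (1, 2 ^ j)"
proof (induction j)
  case 0
  have "cw n 0 \<in> carrier (free_group n)"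
    using assms by (simp add: free_group_carrier letter_inv_def)
  then show ?case by (simp add: dmul_def ev_def)
next
  case (Suc j)
  let ?F = "free_group n"
  interpret group ?F by (rule free_group_is_group)
  have a: "[(0, True)] \<in> carrier ?F" using assms by (simp add: free_group_carrier)
  have pa: "phi [(0, True)] = (-1, 0)" by (simp add: dmul_def ev_def)
  have cL: "cw n j \<in> lower_central ?F j" and pc: "phi (cw n j) = (1, 2 ^ j)" using Suc by auto
  have cc: "cw n j \<in> carrier ?F" using cL lower_central_carrier by blast
  have "cw n (Suc j) \<in> (\<Union>h1\<in>lower_central ?F j. \<Union>h2\<in>carrier ?F.
        {h1 \<otimes>\<^bsub>?F\<^esub> h2 \<otimes>\<^bsub>?F\<^esub> inv\<^bsub>?F\<^esub> h1 \<otimes>\<^bsub>?F\<^esub> inv\<^bsub>?F\<^esub> h2})"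
    using cL a by auto
  then have L: "cw n (Suc j) \<in> lower_central ?F (Suc j)"
    unfolding lower_central.simps by (rule generate.incl)
  have "phi (cw n (Suc j)) = dmul (dmul (dmul (1, 2 ^ j) (-1, 0)) (1, - (2 ^ j))) (-1, 0)"
    using phi_inv[OF cc] phi_inv[OF a] pc pa by (simp add: phi_mult)
  also have "\<dots> = (1, 2 ^ Suc j)" by (simp add: dmul_def)
  finally show ?case using L by simp
qed

lemma not_nilpotent_inter:
  assumes "n \<ge> 2"
  shows "\<not> lower_central (free_group n) j \<subseteq> {w. \<forall>k. w \<in> lower_central (free_group n) k}"
proof
  assume s: "lower_central (free_group n) j \<subseteq> {w. \<forall>k. w \<in> lower_central (free_group n) k}"
  have "cw n j \<in> lower_central (free_group n) (Suc j)" using cw_props[OF assms, of j] s by blast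
  then have "phi (cw n j) \<in> Wset (Suc j)" by (rule upper_bound)
  then have "(2::int) ^ Suc j dvd 2 ^ j" using cw_props[OF assms, of j] by (simp add: Wset_def)
  then have "(2::int) ^ Suc j \<le> 2 ^ j" by (rule zdvd_imp_le) simp
  then show False by simp
qed


lemma clopen_decomp:
  assumes Z: "zero_dim_Polish Z" and U: "openin Z U"
  shows "\<exists>V::nat \<Rightarrow> 'y set. (\<forall>i. openin Z (V i) \<and> closedin Z (V i) \<and> V i \<subseteq> U) \<and> (\<Union>i. V i) = U"
proof -
  have cm: "completely_metrizable_space Z" and sep: "separable_space Z" and dim: "Z dim_le 0"
    using Z by (auto simp: zero_dim_Polish_def Polish_top_def)
  obtain M d where ms: "Metric_space M d" and ZM: "Z = Metric_space.mtopology M d"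
    using cm unfolding completely_metrizable_space_def by blast
  interpret Metric_space M d by (rule ms)
  obtain C where C: "countable C" "C \<subseteq> topspace Z" "Z closure_of C = topspace Z"
    using sep unfolding separable_space_def by blast
  have nb: "neighbourhood_base_of (\<lambda>V. closedin Z V \<and> openin Z V) Z"
    using dim dimension_le_0_neighbourhood_base_of_clopen by blast
  have Usub: "U \<subseteq> M" using U openin_subset ZM by fastforce
  define good where "good c k \<longleftrightarrow> (\<exists>V. openin Z V \<and> closedin Z V \<and> mball c (1 / Suc k) \<subseteq> V \<and> V \<subseteq> U)"
    for c k
  define W where "W = (\<lambda>(c, k). if good c k then (SOME V. openin Z V \<and> closedin Z V \<and> mball c (1 / Suc k) \<subseteq> V \<and> V \<subseteq> U) else {})"
  have Wp: "openin Z (W p) \<and> closedin Z (W p) \<and> W p \<subseteq> U" for p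
  proof (cases p)
    case (Pair c k)
    show ?thesis
    proof (cases "good c k")
      case True
      then show ?thesis unfolding W_def Pair using someI_ex[OF True[unfolded good_def]] by auto
    next
      case False then show ?thesis unfolding W_def Pair by simp
    qed
  qed
  have Wm: "mball c (1 / Suc k) \<subseteq> W (c, k)" if "good c k" for c k
    unfolding W_def using someI_ex[OF that[unfolded good_def]] that by auto
  have cover: "\<exists>c\<in>C. \<exists>k. good c k \<and> x \<in> mball c (1 / Suc k)" if x: "x \<in> U" for x
  proof -
    have xM: "x \<in> M" using x Usub by blast
    obtain U' V0 where U': "openin Z U'" and V0: "closedin Z V0 \<and> openin Z V0"
      and xU': "x \<in> U'" and sub1: "U' \<subseteq> V0" and sub2: "V0 \<subseteq> U"
    proof -
      have "neighbourhood_base_at x (\<lambda>V. closedin Z V \<and> openin Z V) Z"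
        using nb xM ZM unfolding neighbourhood_base_of_def by simp
      then show ?thesis using U x that unfolding neighbourhood_base_at_def by blast
    qed
    obtain r where r: "r > 0" "mball x r \<subseteq> U'" using U' xU' ZM openin_mtopology by blast
    obtain k :: nat where k: "2 / r < real k" using reals_Archimedean2 by blast
    have kr: "2 / real (Suc k) < r"
    proof -
      have "2 / r < real (Suc k)" using k by simp
      then have "2 < r * real (Suc k)" using r(1) by (simp add: field_simps)
      then show ?thesis using r(1) by (simp add: field_simps)
    qed
    have e: "(0::real) < 1 / real (Suc k)" by simp
    have "x \<in> Z closure_of C" using C(3) xM ZM by simp
    moreover have "x \<in> mball x (1 / Suc k)" using xM e by simp
    ultimately obtain c where c: "c \<in> C" "c \<in> mball x (1 / Suc k)"
    proof -
      assume a: "x \<in> Z closure_of C" "x \<in> mball x (1 / Suc k)"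
        and th: "\<And>c. c \<in> C \<Longrightarrow> c \<in> mball x (1 / Suc k) \<Longrightarrow> thesis"
      have "\<forall>T. x \<in> T \<and> openin Z T \<longrightarrow> (\<exists>y. y \<in> C \<and> y \<in> T)"
        using a(1) unfolding in_closure_of by blast
      moreover have "openin Z (mball x (1 / Suc k))" using ZM by simp
      ultimately show thesis using a(2) th by blast
    qed
    have cM: "c \<in> M" using c by simp
    have xc: "x \<in> mball c (1 / Suc k)" using c xM by (simp add: commute)
    have "mball c (1 / Suc k) \<subseteq> mball x r"
    proof
      fix y assume y: "y \<in> mball c (1 / Suc k)"
      then have yM: "y \<in> M" by simp
      have "d x y \<le> d x c + d c y" using triangle[OF xM cM yM] .
      also have "\<dots> < 1 / Suc k + 1 / Suc k" using c y by (intro add_strict_mono) auto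
      also have "\<dots> = 2 / Suc k" by simp
      also have "\<dots> < r" using kr by simp
      finally show "y \<in> mball x r" using xM yM by simp
    qed
    then have "good c k" unfolding good_def using V0 sub1 sub2 r(2) by blast
    then show ?thesis using c(1) xc by blast
  qed
  show ?thesis
  proof (cases "C = {}")
    case True
    then have "topspace Z = {}" using C(3) by simp
    then have "U = {}" using U openin_subset by blast
    then show ?thesis by (intro exI[of _ "\<lambda>_. {}"]) simp
  next
    case False
    define V where "V i = W (from_nat_into (C \<times> (UNIV :: nat set)) i)" for i
    have rng: "range (from_nat_into (C \<times> (UNIV :: nat set))) = C \<times> UNIV"
      using False C(1) by (intro range_from_nat_into) auto
    have "(\<Union>i. V i) = U"
    proof
      show "(\<Union>i. V i) \<subseteq> U" unfolding V_def using Wp by blast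
    next
      show "U \<subseteq> (\<Union>i. V i)"
      proof
        fix x assume "x \<in> U"
        then obtain c k where ck: "c \<in> C" "good c k" "x \<in> mball c (1 / Suc k)" using cover by blast
        have "(c, k) \<in> range (from_nat_into (C \<times> (UNIV :: nat set)))" using rng ck(1) by simp
        then obtain i where "from_nat_into (C \<times> (UNIV :: nat set)) i = (c, k)" by (metis rangeE)
        then have "x \<in> V i" unfolding V_def using Wm[OF ck(2)] ck(3) by auto
        then show "x \<in> (\<Union>i. V i)" by blast
      qed
    qed
    then show ?thesis using Wp unfolding V_def by blast
  qed
qed


definition XT :: "(fg_word \<Rightarrow> bool) topology" where
  "XT = product_topology (\<lambda>_. discrete_topology (UNIV :: bool set)) UNIV"

lemma Gn_top_XT: "Gn_top n = subtopology XT (Gn_points n)"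
  by (simp add: Gn_top_def XT_def)

lemma topspace_XT [simp]: "topspace XT = UNIV"
  by (simp add: XT_def)

lemma cyl: "openin XT {P. P w} \<and> closedin XT {P. P w}"
proof -
  have c: "continuous_map XT (discrete_topology UNIV) (\<lambda>P. P w)"
    unfolding XT_def by (rule continuous_map_product_projection) simp
  have e: "{P. P w} = {x \<in> topspace XT. x w \<in> {True}}" by auto
  have o: "openin XT {x \<in> topspace XT. x w \<in> {True}}"
    by (rule openin_continuous_map_preimage[OF c]) simp
  have cl: "closedin XT {x \<in> topspace XT. x w \<in> {True}}"
    by (rule closedin_continuous_map_preimage[OF c]) simp
  show ?thesis unfolding e using o cl by blast
qed

lemma cyl_finite: "finite C \<Longrightarrow> openin XT {P. \<forall>w\<in>C. P w} \<and> closedin XT {P. \<forall>w\<in>C. P w}"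
proof (induction C rule: finite_induct)
  case empty
  have "{P. \<forall>w\<in>{}. P w} = topspace XT" by simp
  then show ?case by (metis openin_topspace closedin_topspace)
next
  case (insert a C)
  have e: "{P. \<forall>w\<in>insert a C. P w} = {P. P a} \<inter> {P. \<forall>w\<in>C. P w}" by auto
  show ?case unfolding e using insert.IH cyl[of a] by auto
qed

lemma lower_central_antimono:
  assumes "group G"
  shows "m \<le> m' \<Longrightarrow> lower_central G m' \<subseteq> lower_central G m"
proof (induction m' rule: dec_induct)
  case base then show ?case by simp
next
  case (step k)
  then show ?case using group.lower_central_Suc_subset[OF assms, of k] by blast
qed

lemma nilp_iff:
  assumes "P \<in> Gn_points n"
  shows "nilpotent_class_le (free_group n Mod {w. P w}) k \<longleftrightarrow> (\<forall>w\<in>comms (free_group n) (gens n) k. P w)"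
proof -
  interpret normal "{w. P w}" "free_group n" using assms by (simp add: Gn_points_def)
  have "nilpotent_class_le (free_group n Mod {w. P w}) k \<longleftrightarrow> lower_central (free_group n) k \<subseteq> {w. P w}"
    by (rule nilpotent_class_le_Mod)
  also have "\<dots> \<longleftrightarrow> comms (free_group n) (gens n) k \<subseteq> {w. P w}"
  proof
    assume "lower_central (free_group n) k \<subseteq> {w. P w}"
    then show "comms (free_group n) (gens n) k \<subseteq> {w. P w}"
      using comms_subset[OF gens_carrier] by blast
  next
    assume "comms (free_group n) (gens n) k \<subseteq> {w. P w}"
    then show "lower_central (free_group n) k \<subseteq> {w. P w}"
      using comms_normal_closure[OF gens_carrier free_group_generated] normal_axioms by blast
  qed
  finally show ?thesis by blast
qed

lemma Ak_eq: "{P \<in> Gn_points n. nilpotent_class_le (free_group n Mod {w. P w}) k}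
   = Gn_points n \<inter> {P. \<forall>w\<in>comms (free_group n) (gens n) k. P w}"
  using nilp_iff by blast

lemma Ak_clopen: "clopenin (Gn_top n) {P \<in> Gn_points n. nilpotent_class_le (free_group n Mod {w. P w}) k}"
proof -
  have f: "finite (comms (free_group n) (gens n) k)" by (rule comms_finite[OF gens_finite])
  show ?thesis unfolding Ak_eq clopenin_def Gn_top_XT
    using cyl_finite[OF f] openin_subtopology_Int2 closedin_subtopology_Int_closed by blast
qed

lemma Ninf_normal: "{w. \<forall>k. w \<in> lower_central (free_group n) k} \<lhd> free_group n"
proof -
  interpret group "free_group n" by (rule free_group_is_group)
  have e: "{w. \<forall>k. w \<in> lower_central (free_group n) k} = \<Inter> (range (lower_central (free_group n)))"
    by auto
  have s: "subgroup (\<Inter> (range (lower_central (free_group n)))) (free_group n)"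
    by (rule subgroups_Inter) (auto intro: lower_central_subgroup)
  show ?thesis unfolding e
  proof (rule normal_invI[OF s])
    fix x h assume x: "x \<in> carrier (free_group n)" and h: "h \<in> \<Inter> (range (lower_central (free_group n)))"
    have "x \<otimes>\<^bsub>free_group n\<^esub> h \<otimes>\<^bsub>free_group n\<^esub> inv\<^bsub>free_group n\<^esub> x \<in> lower_central (free_group n) k" for k
      using normal.inv_op_closed2[OF lower_central_normal x] h by blast
    then show "x \<otimes>\<^bsub>free_group n\<^esub> h \<otimes>\<^bsub>free_group n\<^esub> inv\<^bsub>free_group n\<^esub> x \<in> \<Inter> (range (lower_central (free_group n)))"
      by blast
  qed
qed

lemma locally_const_continuous:
  fixes g :: "'a \<Rightarrow> 'b"
  assumes "\<And>y. y \<in> topspace Z \<Longrightarrow> \<exists>T. openin Z T \<and> y \<in> T \<and> (\<forall>z\<in>T. g z = g y)"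
  shows "continuous_map Z (discrete_topology UNIV) g"
  unfolding continuous_map_def
proof (intro conjI allI impI)
  show "g \<in> topspace Z \<rightarrow> topspace (discrete_topology UNIV)" by simp
next
  fix U :: "'b set" assume "openin (discrete_topology UNIV) U"
  show "openin Z {x \<in> topspace Z. g x \<in> U}"
  proof (subst openin_subopen, intro ballI)
    fix x assume x: "x \<in> {x \<in> topspace Z. g x \<in> U}"
    then obtain T where T: "openin Z T" "x \<in> T" "\<forall>z\<in>T. g z = g x" using assms by blast
    have "T \<subseteq> topspace Z" using T(1) openin_subset by blast
    then have "T \<subseteq> {x \<in> topspace Z. g x \<in> U}" using T(3) x by auto
    then show "\<exists>T. openin Z T \<and> x \<in> T \<and> T \<subseteq> {x \<in> topspace Z. g x \<in> U}" using T by blast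
  qed
qed


theorem mainTheorem9:
  fixes n :: nat
  assumes "n > 1"
  shows "(\<forall>k\<ge>1. clopenin (Gn_top n)
            {P \<in> Gn_points n. nilpotent_class_le (free_group n Mod {w. P w}) k})
       \<and> Sigma01_complete TYPE('y) (Gn_top n)
            {P \<in> Gn_points n. nilpotent_grp (free_group n Mod {w. P w})}"
proof -
  have n2: "n \<ge> 2" using assms by simp
  let ?F = "free_group n"
  let ?L = "lower_central ?F"
  let ?Nil = "{P \<in> Gn_points n. nilpotent_grp (?F Mod {w. P w})}"
  have grp: "group ?F" by (rule free_group_is_group)
  have part1: "\<forall>k\<ge>1. clopenin (Gn_top n) {P \<in> Gn_points n. nilpotent_class_le (?F Mod {w. P w}) k}"
    using Ak_clopen by blast
  have nilp_eq: "?Nil = (\<Union>k. {P \<in> Gn_points n. nilpotent_class_le (?F Mod {w. P w}) k})"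
    by (auto simp: nilpotent_grp_def)
  have op: "openin (Gn_top n) ?Nil"
    unfolding nilp_eq using Ak_clopen[of n] unfolding clopenin_def by blast
  have compl: "\<exists>f. continuous_map Z (Gn_top n) f \<and> {y \<in> topspace Z. f y \<in> ?Nil} = U"
    if ZU: "zero_dim_Polish Z \<and> openin Z U" for Z :: "'y topology" and U
  proof -
    obtain V :: "nat \<Rightarrow> 'y set" where V: "\<forall>i. openin Z (V i) \<and> closedin Z (V i) \<and> V i \<subseteq> U"
      and VU: "(\<Union>i. V i) = U"
      using clopen_decomp[of Z U] ZU by blast
    have UZ: "U \<subseteq> topspace Z" using ZU openin_subset by blast
    define mu where "mu y = (LEAST m. y \<in> V m)" for y
    define f where "f y = (if y \<in> U then (\<lambda>w. w \<in> ?L (mu y)) else (\<lambda>w. \<forall>k. w \<in> ?L k))" for y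
    have muV: "y \<in> V (mu y)" if "y \<in> U" for y
    proof -
      have "\<exists>m. y \<in> V m" using that VU by blast
      then show ?thesis unfolding mu_def by (rule LeastI_ex)
    qed
    have muL: "y \<notin> V i" if "i < mu y" for y i
      using that not_less_Least unfolding mu_def by blast
    have fG: "f y \<in> Gn_points n" for y
    proof (cases "y \<in> U")
      case True
      then show ?thesis
        by (simp add: f_def Gn_points_def group.lower_central_normal[OF grp])
    next
      case False
      then show ?thesis using Ninf_normal[of n] by (simp add: f_def Gn_points_def)
    qed
    have fN: "f y \<in> ?Nil \<longleftrightarrow> y \<in> U" for y
    proof (cases "y \<in> U")
      case True
      interpret normal "?L (mu y)" ?F by (rule group.lower_central_normal[OF grp])
      have "nilpotent_class_le (?F Mod ?L (mu y)) (mu y)"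
        using nilpotent_class_le_Mod by blast
      then show ?thesis using True fG[of y] by (auto simp: f_def nilpotent_grp_def)
    next
      case False
      interpret normal "{w. \<forall>k. w \<in> ?L k}" ?F by (rule Ninf_normal)
      have "\<not> nilpotent_class_le (?F Mod {w. \<forall>k. w \<in> ?L k}) k" for k
        using nilpotent_class_le_Mod not_nilpotent_inter[OF n2] by blast
      then show ?thesis using False by (simp add: f_def nilpotent_grp_def)
    qed
    have loc: "\<exists>T. openin Z T \<and> y \<in> T \<and> (\<forall>z\<in>T. f z w = f y w)" if y: "y \<in> topspace Z" for y w
    proof (cases "y \<in> U")
      case True
      define m where "m = mu y"
      define T where "T = V m - \<Union> (V ` {..<m})"
      have "closedin Z (\<Union> (V ` {..<m}))" using V by (intro closedin_Union) auto
      then have oT: "openin Z T" unfolding T_def using V by blast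
      have y1: "y \<in> V m" unfolding m_def by (rule muV[OF True])
      have y2: "y \<notin> \<Union> (V ` {..<m})" unfolding m_def using muL[of _ y] by blast
      have yT: "y \<in> T" unfolding T_def using y1 y2 by blast
      have "f z = f y" if z: "z \<in> T" for z
      proof -
        have zm: "z \<in> V m" and zn: "\<forall>i<m. z \<notin> V i" using z unfolding T_def by auto
        have zU: "z \<in> U" using zm V by blast
        have le: "mu z \<le> m" unfolding mu_def by (rule Least_le) (rule zm)
        have "z \<in> V (mu z)" by (rule muV[OF zU])
        then have "\<not> mu z < m" using zn by blast
        then have "mu z = mu y" using le m_def by simp
        then show ?thesis using zU True unfolding f_def by simp
      qed
      then have "\<forall>z\<in>T. f z w = f y w" by simp
      then show ?thesis using oT yT by blast
    next
      case False
      show ?thesis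
      proof (cases "\<forall>k. w \<in> ?L k")
        case True
        have "f z w = f y w" for z using True \<open>y \<notin> U\<close> by (simp add: f_def)
        then show ?thesis using y by blast
      next
        case nw: False
        then obtain M where M: "w \<notin> ?L M" by blast
        define T where "T = topspace Z - \<Union> (V ` {..<M})"
        have "closedin Z (\<Union> (V ` {..<M}))" using V by (intro closedin_Union) auto
        then have oT: "openin Z T" unfolding T_def by blast
        have yT: "y \<in> T" unfolding T_def using y False V by blast
        have fyw: "\<not> f y w" using False nw by (simp add: f_def)
        have "\<not> f z w" if z: "z \<in> T" for z
        proof (cases "z \<in> U")
          case True
          have "\<not> mu z < M" using z muV[OF True] unfolding T_def by blast
          then have "?L (mu z) \<subseteq> ?L M" using lower_central_antimono[OF grp] by simp
          then show ?thesis using M True by (auto simp: f_def)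
        next
          case False
          then show ?thesis using nw by (simp add: f_def)
        qed
        then show ?thesis using oT yT fyw by blast
      qed
    qed
    have cont: "continuous_map Z (Gn_top n) f"
      unfolding Gn_top_XT continuous_map_in_subtopology
    proof
      show "continuous_map Z XT f"
        unfolding XT_def continuous_map_componentwise_UNIV
      proof
        fix w
        show "continuous_map Z (discrete_topology UNIV) (\<lambda>x. f x w)"
          by (rule locally_const_continuous) (use loc in blast)
      qed
      show "f \<in> topspace Z \<rightarrow> Gn_points n" using fG by blast
    qed
    have "{y \<in> topspace Z. f y \<in> ?Nil} = U" using fN UZ by blast
    then show ?thesis using cont by blast
  qed
  have "Sigma01_complete TYPE('y) (Gn_top n) ?Nil"
    unfolding Sigma01_complete_def
  proof (intro conjI allI impI)
    show "openin (Gn_top n) ?Nil" by (rule op)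
  next
    fix Z :: "'y topology" and U
    assume "zero_dim_Polish Z \<and> openin Z U"
    then show "\<exists>f. continuous_map Z (Gn_top n) f \<and> {y \<in> topspace Z. f y \<in> ?Nil} = U"
      by (rule compl)
  qed
  then show ?thesis using part1 by blast
qed


end
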